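(* Let $f : \{0, 1\}^n \to \{0, 1\}$ be a Boolean function. Then $\lceil\log(\mathsf{NAADT}(f))\rceil \leq \mathsf{D}_{\mathrm{cc}}^\rightarrow(f \circ \mathsf{AND}) \leq \mathsf{NAADT}(f)$.
   Context: $\mathsf{AND}_S(x)=\prod_{i\in S}x_i$ for $S\subseteq[n]$. $\mathsf{NAADT}(f)$ is the minimum $k$ for which there exist $S_1,\dots,S_k\subseteq[n]$ such that $f(x)$ is determined by $\mathsf{AND}_{S_1}(x),\dots,\mathsf{AND}_{S_k}(x)$ for all $x$. $f\circ\mathsf{AND}$ is the two-party function $(x,y)\mapsto f(x_1\wedge y_1,\dots,x_n\wedge y_n)$ (Alice holds $x$, Bob $y$); $\mathsf{D}_{\mathrm{cc}}^\rightarrow$ is deterministic one-way communication complexity. Logarithms are base 2. *)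

theory Defs
  imports Complex_Main
begin

text \<open>Boolean inputs x in {0,1}^n are modelled as functions from a finite index
type 'n (with n = CARD('n)) to bool; True = 1, False = 0.\<close>

definition AND_on :: "'n set \<Rightarrow> ('n \<Rightarrow> bool) \<Rightarrow> bool" where
  "AND_on S x = (\<forall>i\<in>S. x i)"

definition NAADT :: "(('n::finite \<Rightarrow> bool) \<Rightarrow> bool) \<Rightarrow> nat" where
  "NAADT f = (LEAST k. \<exists>Ss :: 'n set list. length Ss = k \<and>
      (\<forall>x y. (\<forall>S\<in>set Ss. AND_on S x = AND_on S y) \<longrightarrow> f x = f y))"

text \<open>Composition f o AND: Alice holds x, Bob holds y.\<close>
definition comp_AND :: "(('n \<Rightarrow> bool) \<Rightarrow> bool) \<Rightarrow> ('n \<Rightarrow> bool) \<Rightarrow> ('n \<Rightarrow> bool) \<Rightarrow> bool" where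
  "comp_AND f x y = f (\<lambda>i. x i \<and> y i)"

definition D_oneway :: "('a \<Rightarrow> 'b \<Rightarrow> bool) \<Rightarrow> nat" where
  "D_oneway F = (LEAST c. \<exists>(m :: 'a \<Rightarrow> bool list) (g :: bool list \<Rightarrow> 'b \<Rightarrow> bool).
      (\<forall>x. length (m x) = c) \<and> (\<forall>x y. F x y = g (m x) y))"

end

theory Submission
  imports Defs
begin

definition validS :: "(('n \<Rightarrow> bool) \<Rightarrow> bool) \<Rightarrow> 'n set list \<Rightarrow> bool" where
  "validS f Ss = (\<forall>x y. (\<forall>S\<in>set Ss. AND_on S x = AND_on S y) \<longrightarrow> f x = f y)"

lemma AND_on_conj: "AND_on S (\<lambda>i. x i \<and> y i) = (AND_on S x \<and> AND_on S y)"
  unfolding AND_on_def by auto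

lemma upper:
  assumes v: "validS f Ss"
  shows "D_oneway (comp_AND f) \<le> length Ss"
proof -
  define m where "m x = map (\<lambda>S. AND_on S x) Ss" for x :: "'a \<Rightarrow> bool"
  define g where "g w y = f (SOME z. \<forall>j<length Ss. AND_on (Ss!j) z = (w!j \<and> AND_on (Ss!j) y))"
    for w :: "bool list" and y :: "'a \<Rightarrow> bool"
  have "comp_AND f x y = g (m x) y" for x y
  proof -
    let ?P = "\<lambda>z. \<forall>j<length Ss. AND_on (Ss!j) z = (m x!j \<and> AND_on (Ss!j) y)"
    have "?P (\<lambda>i. x i \<and> y i)" by (simp add: m_def AND_on_conj)
    hence p: "?P (SOME z. ?P z)" by (rule someI[of ?P])
    have "\<forall>S\<in>set Ss. AND_on S (SOME z. ?P z) = AND_on S (\<lambda>i. x i \<and> y i)"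
    proof
      fix S assume "S \<in> set Ss"
      then obtain j where "j < length Ss" "S = Ss!j" by (auto simp: in_set_conv_nth)
      thus "AND_on S (SOME z. ?P z) = AND_on S (\<lambda>i. x i \<and> y i)"
        using p by (simp add: m_def AND_on_conj)
    qed
    hence "f (SOME z. ?P z) = f (\<lambda>i. x i \<and> y i)" using v unfolding validS_def by blast
    thus ?thesis by (simp add: g_def comp_AND_def)
  qed
  hence "(\<forall>x. length (m x) = length Ss) \<and> (\<forall>x y. comp_AND f x y = g (m x) y)"
    by (simp add: m_def)
  thus ?thesis unfolding D_oneway_def by (intro Least_le) blast
qed

lemma lower:
  fixes f :: "('n::finite \<Rightarrow> bool) \<Rightarrow> bool" and m :: "('n \<Rightarrow> bool) \<Rightarrow> bool list"
  assumes len: "\<forall>x. length (m x) = c"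
    and pr: "\<forall>x y. comp_AND f x y = g (m x) y"
  shows "\<exists>Ss. validS f Ss \<and> length Ss \<le> 2 ^ c"
proof -
  define R where "R x = (\<lambda>y. f (\<lambda>i. x i \<and> y i))" for x :: "'n \<Rightarrow> bool"
  have Rg: "R x = g (m x)" for x using pr by (auto simp: R_def comp_AND_def)
  have meet: "R (\<lambda>i. x i \<and> z i) = R z" if "R x = R z" for x z
  proof
    fix y
    have "R (\<lambda>i. x i \<and> z i) y = R x (\<lambda>i. z i \<and> y i)" by (simp add: R_def conj_assoc)
    also have "\<dots> = R z (\<lambda>i. z i \<and> y i)" using that by simp
    also have "\<dots> = R z y" by (simp add: R_def)
    finally show "R (\<lambda>i. x i \<and> z i) y = R z y" .
  qed
  define sz where "sz x = card {i. x i}" for x :: "'n \<Rightarrow> bool"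
  define rep where "rep \<rho> = arg_min sz (\<lambda>x. R x = \<rho>)" for \<rho>
  have repR: "R (rep (R z)) = R z" and repmin: "\<And>w. R w = R z \<Longrightarrow> sz (rep (R z)) \<le> sz w" for z
    using arg_min_nat_lemma[of "\<lambda>x. R x = R z" z sz] by (auto simp: rep_def)
  have reple: "rep (R z) i \<Longrightarrow> z i" for z i
  proof -
    assume ri: "rep (R z) i"
    let ?r = "rep (R z)"
    have "R (\<lambda>i. ?r i \<and> z i) = R z" using meet repR by simp
    hence "sz ?r \<le> sz (\<lambda>i. ?r i \<and> z i)" by (rule repmin)
    hence "card {i. ?r i} \<le> card {i. ?r i \<and> z i}" by (simp add: sz_def)
    moreover have "{i. ?r i \<and> z i} \<subseteq> {i. ?r i}" by auto
    ultimately have "{i. ?r i \<and> z i} = {i. ?r i}"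
      by (meson card_seteq finite)
    thus "z i" using ri by blast
  qed
  have fin: "finite {xs::bool list. length xs = c}"
    using finite_lists_length_eq[of "UNIV::bool set" c] by simp
  define T where "T = (\<lambda>\<rho>. {i. rep \<rho> i}) ` range R"
  obtain Ss where Ss: "set Ss = T" "distinct Ss" using finite_distinct_list[of T] by auto
  have "length Ss = card T" using Ss distinct_card by metis
  also have "\<dots> \<le> card (range R)" unfolding T_def by (rule card_image_le) simp
  also have "range R = g ` range m" using Rg by auto
  also have "card \<dots> \<le> card (range m)" using fin by (intro card_image_le) (auto intro: finite_subset simp: len)
  also have "\<dots> \<le> card {xs. set xs \<subseteq> (UNIV::bool set) \<and> length xs = c}"
    proof -
    have e: "{xs. set xs \<subseteq> (UNIV::bool set) \<and> length xs = c} = {xs. length xs = c}" by simp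
    have "range m \<subseteq> {xs. length xs = c}" using len by auto
    hence "card (range m) \<le> card {xs::bool list. length xs = c}" by (rule card_mono[OF fin])
    thus ?thesis by (simp only: e)
  qed
  also have "\<dots> = 2 ^ c" using card_lists_length_eq[of "UNIV::bool set" c] by simp
  finally have L: "length Ss \<le> 2 ^ c" .
  have "validS f Ss" unfolding validS_def
  proof (intro allI impI)
    fix z z' :: "'n \<Rightarrow> bool"
    assume ag: "\<forall>S\<in>set Ss. AND_on S z = AND_on S z'"
    let ?C = "rep (R z)" and ?D = "rep (R z')"
    have "AND_on {i. ?C i} z" unfolding AND_on_def using reple by blast
    moreover have "{i. ?C i} \<in> set Ss" using Ss by (simp add: T_def)
    ultimately have "AND_on {i. ?C i} z'" using ag by blast
    hence C: "?C i \<Longrightarrow> z' i" for i by (simp add: AND_on_def)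
    have "AND_on {i. ?D i} z'" unfolding AND_on_def using reple by blast
    moreover have "{i. ?D i} \<in> set Ss" using Ss by (simp add: T_def)
    ultimately have "AND_on {i. ?D i} z" using ag by blast
    hence D: "?D i \<Longrightarrow> z i" for i by (simp add: AND_on_def)
    have e1: "f z = f ?C" using fun_cong[OF repR[of z], of "\<lambda>_. True"] by (simp add: R_def)
    have e2: "f z' = f ?D" using fun_cong[OF repR[of z'], of "\<lambda>_. True"] by (simp add: R_def)
    have "(\<lambda>i. z' i \<and> ?C i) = ?C" using C by blast
    hence "f ?C = R z' ?C" unfolding R_def by simp
    also have "\<dots> = R ?D ?C" using repR[of z'] by simp
    also have "\<dots> = f (\<lambda>i. ?C i \<and> ?D i)" by (simp add: R_def conj_commute)
    finally have a: "f ?C = f (\<lambda>i. ?C i \<and> ?D i)" .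
    have "(\<lambda>i. z i \<and> ?D i) = ?D" using D by blast
    hence "f ?D = R z ?D" unfolding R_def by simp
    also have "\<dots> = R ?C ?D" using repR[of z] by simp
    also have "\<dots> = f (\<lambda>i. ?C i \<and> ?D i)" by (simp add: R_def)
    finally have b: "f ?D = f (\<lambda>i. ?C i \<and> ?D i)" .
    show "f z = f z'" using e1 e2 a b by simp
  qed
  thus ?thesis using L by blast
qed

theorem claim4p3:
  fixes f :: "('n::finite \<Rightarrow> bool) \<Rightarrow> bool"
  shows "\<lceil>log 2 (real (NAADT f))\<rceil> \<le> int (D_oneway (comp_AND f))
       \<and> D_oneway (comp_AND f) \<le> NAADT f"
proof -
  obtain S0 :: "'n set list" where S0: "set S0 = UNIV" using finite_list[of "UNIV :: 'n set set"] by auto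
  have v0: "validS f S0" unfolding validS_def
  proof (intro allI impI)
    fix x y :: "'n \<Rightarrow> bool"
    assume "\<forall>S\<in>set S0. AND_on S x = AND_on S y"
    hence "AND_on {i} x = AND_on {i} y" for i using S0 by blast
    hence "x = y" by (auto simp: AND_on_def)
    thus "f x = f y" by simp
  qed
  have "\<exists>Ss :: 'n set list. length Ss = NAADT f \<and> validS f Ss"
    unfolding NAADT_def validS_def by (rule LeastI[of _ "length S0"]) (use v0 validS_def in blast)
  then obtain Ss :: "'n set list" where Ss: "length Ss = NAADT f" "validS f Ss" by blast
  have up: "D_oneway (comp_AND f) \<le> NAADT f" using upper[OF Ss(2)] Ss(1) by simp
  have "\<exists>(m :: ('n \<Rightarrow> bool) \<Rightarrow> bool list) (g :: bool list \<Rightarrow> ('n \<Rightarrow> bool) \<Rightarrow> bool).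
      (\<forall>x. length (m x) = D_oneway (comp_AND f)) \<and> (\<forall>x y. comp_AND f x y = g (m x) y)"
  proof -
    define m where "m x = map (\<lambda>S. AND_on S x) Ss" for x :: "'n \<Rightarrow> bool"
    have ex: "\<exists>(m :: ('n \<Rightarrow> bool) \<Rightarrow> bool list) (g :: bool list \<Rightarrow> ('n \<Rightarrow> bool) \<Rightarrow> bool) c.
      (\<forall>x. length (m x) = c) \<and> (\<forall>x y. comp_AND f x y = g (m x) y)"
    proof -
      define g where "g w y = f (SOME z. \<forall>j<length Ss. AND_on (Ss!j) z = (w!j \<and> AND_on (Ss!j) y))"
        for w :: "bool list" and y :: "'n \<Rightarrow> bool"
      have "comp_AND f x y = g (m x) y" for x y
      proof -
        let ?P = "\<lambda>z. \<forall>j<length Ss. AND_on (Ss!j) z = (m x!j \<and> AND_on (Ss!j) y)"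
        have "?P (\<lambda>i. x i \<and> y i)" by (simp add: m_def AND_on_conj)
        hence p: "?P (SOME z. ?P z)" by (rule someI[of ?P])
        have "\<forall>S\<in>set Ss. AND_on S (SOME z. ?P z) = AND_on S (\<lambda>i. x i \<and> y i)"
        proof
          fix S assume "S \<in> set Ss"
          then obtain j where "j < length Ss" "S = Ss!j" by (auto simp: in_set_conv_nth)
          thus "AND_on S (SOME z. ?P z) = AND_on S (\<lambda>i. x i \<and> y i)"
            using p by (simp add: m_def AND_on_conj)
        qed
        hence "f (SOME z. ?P z) = f (\<lambda>i. x i \<and> y i)" using Ss(2) unfolding validS_def by blast
        thus ?thesis by (simp add: g_def comp_AND_def)
      qed
      thus ?thesis by (intro exI[of _ m] exI[of _ g] exI[of _ "length Ss"]) (simp add: m_def)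
    qed
    then obtain m0 :: "('n \<Rightarrow> bool) \<Rightarrow> bool list" and g0 :: "bool list \<Rightarrow> ('n \<Rightarrow> bool) \<Rightarrow> bool" and c0
      where "(\<forall>x. length (m0 x) = c0) \<and> (\<forall>x y. comp_AND f x y = g0 (m0 x) y)" by blast
    thus ?thesis unfolding D_oneway_def by (rule LeastI[where k = c0, OF exI[of _ m0], OF exI[of _ g0]])
  qed
  then obtain m :: "('n \<Rightarrow> bool) \<Rightarrow> bool list" and g :: "bool list \<Rightarrow> ('n \<Rightarrow> bool) \<Rightarrow> bool"
    where mg: "\<forall>x. length (m x) = D_oneway (comp_AND f)" "\<forall>x y. comp_AND f x y = g (m x) y" by blast
  obtain T where T: "validS f T" "length T \<le> 2 ^ D_oneway (comp_AND f)"
    using lower[OF mg] by blast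
  have "NAADT f \<le> length T" unfolding NAADT_def using T(1) unfolding validS_def
    by (intro Least_le) blast
  hence N: "NAADT f \<le> 2 ^ D_oneway (comp_AND f)" using T(2) by simp
  have "log 2 (real (NAADT f)) \<le> real (D_oneway (comp_AND f))"
  proof (cases "NAADT f = 0")
    case True thus ?thesis by (simp add: log_def)
  next
    case False
    have "log 2 (real (NAADT f)) \<le> log 2 (2 ^ D_oneway (comp_AND f))"
      using N False by (subst log_le_cancel_iff) (auto simp flip: of_nat_power)
    thus ?thesis by simp
  qed
  hence "\<lceil>log 2 (real (NAADT f))\<rceil> \<le> int (D_oneway (comp_AND f))"
    by (simp add: ceiling_le_iff)
  thus ?thesis using up by simp
qed

end
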